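(* Let $t\in[n]$. If $P$ is a prime ideal of $R$ minimal over $\mathcal{I}^{\langle t\rangle}$, then $P=P^{\langle t\rangle}_S$ for some maximal $t$-switchable set $S\subseteq N$.
   Context: Fix positive integers $n, r_1,\dots,r_n$, let $N=[r_1]\times\cdots\times[r_n]$, and let $R$ be the polynomial ring over a field in the variables $x_a$, $a\in N$. For $a,b\in N$ and $i\in[n]$, ${\rm s}(i,a,b)\in N$ has $i$-th component $b_i$ and other components equal to those of $a$. Let $d(a,b)=\#\{j: a_j\neq b_j\}$ and $f_{i,a,b}=x_ax_b-x_{{\rm s}(i,a,b)}x_{{\rm s}(i,b,a)}$. Let $\mathcal{I}^{\langle t\rangle}=(f_{i,a,b}: a,b\in N,\ d(a,b)=2,\ i\in[t])$. A subset $S\subseteq N$ is $t$-switchable if for all $a,b\in S$ with $d(a,b)=2$ and all $i\in[t]$, ${\rm s}(i,a,b)\in S$. Elements $a,b\in S$ are connected in $S$ if there are $a_0=a,\dots,a_k=b$ in $S$ with $d(a_{j-1},a_j)\le 1$ for all $j$. For $t$-switchable $S$: $\tilde{\mathcal{I}}^{\langle t\rangle}_S=(f_{i,a,b}: i\in[t],\ a,b \text{ connected in } S)$, $\mathrm{Var}^{\langle t\rangle}_S=(x_a: a\notin S)$, $P^{\langle t\rangle}_S=\mathrm{Var}^{\langle t\rangle}_S+\tilde{\mathcal{I}}^{\langle t\rangle}_S$. A $t$-switchable $S$ is maximal $t$-switchable if for every $t$-switchable $T$ properly containing $S$, $P^{\langle t\rangle}_S$ and $P^{\langle t\rangle}_T$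 are incomparable under inclusion. *)

theory Defs
  imports "HOL-Library.Poly_Mapping"
begin

text \<open>Tuples a in N = [r_1] x ... x [r_n] are lists of length n (0-based positions).
  Polynomials: the type (nat list =>0 nat) =>0 'k (finitely supported coefficient
  functions on monomials); the ring R of the paper is the subring of polynomials
  whose variables all lie in N.\<close>

type_synonym 'k mpoly = "(nat list \<Rightarrow>\<^sub>0 nat) \<Rightarrow>\<^sub>0 'k"

definition gridN :: "nat list \<Rightarrow> nat list set" where
  "gridN r = {a. length a = length r \<and> (\<forall>i<length r. 1 \<le> a ! i \<and> a ! i \<le> r ! i)}"

definition polyR :: "nat list \<Rightarrow> 'k::field mpoly set" where
  "polyR r = {p :: 'k mpoly. \<forall>m \<in> Poly_Mapping.keys p. Poly_Mapping.keys m \<subseteq> gridN r}"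

definition Xv :: "nat list \<Rightarrow> 'k::field mpoly" where
  "Xv a = Poly_Mapping.single (Poly_Mapping.single a (1::nat)) 1"

definition ideal_in :: "'a::comm_ring_1 set \<Rightarrow> 'a set \<Rightarrow> bool" where
  "ideal_in R I \<longleftrightarrow> I \<subseteq> R \<and> 0 \<in> I \<and> (\<forall>x\<in>I. \<forall>y\<in>I. x + y \<in> I)
     \<and> (\<forall>s\<in>R. \<forall>x\<in>I. s * x \<in> I)"

definition ideal_gen :: "'a::comm_ring_1 set \<Rightarrow> 'a set \<Rightarrow> 'a set" where
  "ideal_gen R G = \<Inter>{I. ideal_in R I \<and> G \<subseteq> I}"

definition ideal_sum :: "'a::comm_ring_1 set \<Rightarrow> 'a set \<Rightarrow> 'a set" where
  "ideal_sum I J = {x + y | x y. x \<in> I \<and> y \<in> J}"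

definition prime_in :: "'a::comm_ring_1 set \<Rightarrow> 'a set \<Rightarrow> bool" where
  "prime_in R P \<longleftrightarrow> ideal_in R P \<and> P \<noteq> R \<and>
     (\<forall>a\<in>R. \<forall>b\<in>R. a * b \<in> P \<longrightarrow> a \<in> P \<or> b \<in> P)"

definition minimal_prime_over :: "'a::comm_ring_1 set \<Rightarrow> 'a set \<Rightarrow> 'a set \<Rightarrow> bool" where
  "minimal_prime_over R I P \<longleftrightarrow> prime_in R P \<and> I \<subseteq> P \<and>
     (\<forall>Q. prime_in R Q \<and> I \<subseteq> Q \<and> Q \<subseteq> P \<longrightarrow> Q = P)"

text \<open>Combinatorics of the paper. Positions are 0-based: i in [t] becomes i < t.\<close>
definition dist :: "nat list \<Rightarrow> nat list \<Rightarrow> nat" where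
  "dist a b = card {j. j < length a \<and> a ! j \<noteq> b ! j}"

definition sw :: "nat \<Rightarrow> nat list \<Rightarrow> nat list \<Rightarrow> nat list" where
  "sw i a b = a[i := b ! i]"

definition fpol :: "nat \<Rightarrow> nat list \<Rightarrow> nat list \<Rightarrow> 'k::field mpoly" where
  "fpol i a b = Xv a * Xv b - Xv (sw i a b) * Xv (sw i b a)"

definition Iideal :: "nat list \<Rightarrow> nat \<Rightarrow> 'k::field mpoly set" where
  "Iideal r t = ideal_gen (polyR r)
     {fpol i a b | i a b. a \<in> gridN r \<and> b \<in> gridN r \<and> dist a b = 2 \<and> i < t}"

definition switchable :: "nat list \<Rightarrow> nat \<Rightarrow> nat list set \<Rightarrow> bool" where
  "switchable r t S \<longleftrightarrow> S \<subseteq> gridN r \<and>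
     (\<forall>a\<in>S. \<forall>b\<in>S. dist a b = 2 \<longrightarrow> (\<forall>i<t. sw i a b \<in> S))"

definition connected_in :: "nat list set \<Rightarrow> nat list \<Rightarrow> nat list \<Rightarrow> bool" where
  "connected_in S a b \<longleftrightarrow> a \<in> S \<and> b \<in> S \<and>
     (\<lambda>x y. x \<in> S \<and> y \<in> S \<and> dist x y \<le> 1)\<^sup>*\<^sup>* a b"

definition Itilde :: "nat list \<Rightarrow> nat \<Rightarrow> nat list set \<Rightarrow> 'k::field mpoly set" where
  "Itilde r t S = ideal_gen (polyR r) {fpol i a b | i a b. i < t \<and> connected_in S a b}"

definition VarS :: "nat list \<Rightarrow> nat list set \<Rightarrow> 'k::field mpoly set" where
  "VarS r S = ideal_gen (polyR r) {Xv a | a. a \<in> gridN r \<and> a \<notin> S}"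

definition PS :: "nat list \<Rightarrow> nat \<Rightarrow> nat list set \<Rightarrow> 'k::field mpoly set" where
  "PS r t S = ideal_sum (VarS r S) (Itilde r t S)"

definition max_switchable :: "'k::field itself \<Rightarrow> nat list \<Rightarrow> nat \<Rightarrow> nat list set \<Rightarrow> bool" where
  "max_switchable _ r t S \<longleftrightarrow> switchable r t S \<and>
     (\<forall>T. switchable r t T \<and> S \<subset> T \<longrightarrow>
        \<not> ((PS r t S :: 'k mpoly set) \<subseteq> PS r t T) \<and> \<not> ((PS r t T :: 'k mpoly set) \<subseteq> PS r t S))"

end

theory Submission
  imports Defs "HOL-Library.List_Lexorder"
begin


definition Dset :: "nat list \<Rightarrow> nat list \<Rightarrow> nat set" where
  "Dset a b = {j. j < length a \<and> a ! j \<noteq> b ! j}"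

lemma dist_Dset: "dist a b = card (Dset a b)"
  by (simp add: dist_def Dset_def)

lemma finite_Dset[simp]: "finite (Dset a b)"
  by (simp add: Dset_def)

lemma dist_sym: "length a = length b \<Longrightarrow> dist a b = dist b a"
  unfolding dist_Dset Dset_def by metis

lemma dist_le1:
  assumes "length a = length b" "dist a b \<le> 1"
  shows "b = a \<or> (\<exists>l<length a. b = a[l := b!l] \<and> a!l \<noteq> b!l)"
proof (cases "Dset a b = {}")
  case True
  then have "a = b" using assms(1) by (auto simp: Dset_def intro: nth_equalityI)
  then show ?thesis by simp
next
  case False
  then obtain l where l: "l \<in> Dset a b" by auto
  have "card (Dset a b) \<le> 1" using assms(2) by (simp add: dist_Dset)
  then have "\<forall>x\<in>Dset a b. \<forall>y\<in>Dset a b. x = y"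
    using card_le_Suc0_iff_eq[OF finite_Dset] by simp
  then have "Dset a b = {l}" using l by blast
  then have "\<forall>j<length a. j \<noteq> l \<longrightarrow> a!j = b!j" by (auto simp: Dset_def)
  moreover have "l < length a" "a!l \<noteq> b!l" using l by (auto simp: Dset_def)
  ultimately have "b = a[l := b!l]" using assms(1)
    by (intro nth_equalityI) (auto simp: nth_list_update)
  then show ?thesis using \<open>l < length a\<close> \<open>a!l \<noteq> b!l\<close> by blast
qed

lemma dist_upd1: "dist a (a[i:=v]) \<le> 1"
proof -
  have "Dset a (a[i:=v]) \<subseteq> {i}" by (auto simp: Dset_def) (metis nth_list_update_neq)
  then have "card (Dset a (a[i:=v])) \<le> card {i}" by (intro card_mono) auto
  then show ?thesis by (simp add: dist_Dset)
qed

lemma dist_two: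
  assumes "length x = length y" "i < length x" "l < length x" "i \<noteq> l"
    "\<And>j. j < length x \<Longrightarrow> x!j \<noteq> y!j \<longleftrightarrow> j = i \<or> j = l"
  shows "dist x y = 2"
proof -
  have "Dset x y = {i, l}" using assms by (auto simp: Dset_def)
  then show ?thesis using assms(4) by (simp add: dist_Dset)
qed

lemma dist_two_upd:
  assumes "l < length a" "i < length a" "i \<noteq> l" "a!l \<noteq> x" "a!i \<noteq> y"
  shows "dist a ((a[l:=x])[i:=y]) = 2"
proof (rule dist_two[where i=i and l=l])
  fix j assume j: "j < length a"
  have e: "(a[l:=x])[i:=y] ! j = (if j = i then y else if j = l then x else a!j)"
    using j assms by (simp add: nth_list_update)
  show "(a ! j \<noteq> (a[l:=x])[i:=y] ! j) = (j = i \<or> j = l)"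
    unfolding e using assms by auto
qed (use assms in auto)

lemma gridN_length: "a \<in> gridN r \<Longrightarrow> length a = length r"
  by (simp add: gridN_def)

lemma sw_gridN:
  assumes "a \<in> gridN r" "b \<in> gridN r"
  shows "sw i a b \<in> gridN r"
  using assms unfolding gridN_def sw_def
  by (cases "i < length r") (auto simp: nth_list_update)

lemma switchable_sub: "switchable r t S \<Longrightarrow> S \<subseteq> gridN r"
  by (simp add: switchable_def)

definition adjR :: "nat list set \<Rightarrow> nat list \<Rightarrow> nat list \<Rightarrow> bool" where
  "adjR S = (\<lambda>x y. x \<in> S \<and> y \<in> S \<and> dist x y \<le> 1)"

lemma connected_in_adjR: "connected_in S a b \<longleftrightarrow> a \<in> S \<and> b \<in> S \<and> (adjR S)\<^sup>*\<^sup>* a b"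
  by (simp add: connected_in_def adjR_def)

lemma conn_refl: "a \<in> S \<Longrightarrow> connected_in S a a"
  by (simp add: connected_in_def)

lemma conn_trans: "connected_in S a b \<Longrightarrow> connected_in S b c \<Longrightarrow> connected_in S a c"
  unfolding connected_in_adjR by (meson rtranclp_trans)

lemma conn_sym:
  assumes "S \<subseteq> gridN r" "connected_in S a b"
  shows "connected_in S b a"
proof -
  have sym: "adjR S y x" if "adjR S x y" for x y
  proof -
    have "x \<in> gridN r" "y \<in> gridN r" using that assms(1) by (auto simp: adjR_def)
    then have "length x = length y" by (simp add: gridN_length)
    then show ?thesis using that dist_sym[of x y] by (auto simp: adjR_def)
  qed
  have "(adjR S)\<^sup>*\<^sup>* a b" using assms(2) by (simp add: connected_in_adjR)
  then have "(adjR S)\<^sup>*\<^sup>* b a"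
    by (induction rule: rtranclp_induct) (auto intro: converse_rtranclp_into_rtranclp sym)
  then show ?thesis using assms(2) by (simp add: connected_in_adjR)
qed

lemma conn_adj: "x \<in> S \<Longrightarrow> y \<in> S \<Longrightarrow> dist x y \<le> 1 \<Longrightarrow> connected_in S x y"
  by (auto simp: connected_in_def)

lemma conn_mem: "connected_in S a b \<Longrightarrow> a \<in> S \<and> b \<in> S"
  by (simp add: connected_in_def)

lemma CL:
  assumes sw: "switchable r t S" and c: "connected_in S a b" and i: "i < t" and tn: "t \<le> length r"
  shows "a[i := b!i] \<in> S"
proof -
  have sub: "S \<subseteq> gridN r" using sw by (simp add: switchable_def)
  have "(adjR S)\<^sup>*\<^sup>* a b" "a \<in> S" "b \<in> S" using c by (auto simp: connected_in_adjR)
  then show ?thesis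
  proof (induction arbitrary: rule: converse_rtranclp_induct)
    case base
    then show ?case by simp
  next
    case (step a c)
    have aS: "a \<in> S" and cS: "c \<in> S" and dac: "dist a c \<le> 1" using step(1) by (auto simp: adjR_def)
    have IH: "c[i := b!i] \<in> S" using step cS by blast
    have la: "length a = length r" "length c = length r" using aS cS sub gridN_length by blast+
    have il: "i < length a" using i tn la by simp
    have lac: "length a = length c" using la by simp
    from dist_le1[OF lac dac] consider "c = a" | l where "l < length a" "c = a[l := c!l]" "a!l \<noteq> c!l"
      by blast
    then show ?case
    proof cases
      case 1 then show ?thesis using IH by simp
    next
      case (2 l)
      show ?thesis
      proof (cases "l = i")
        case True
        have "c[i := b!i] = (a[l := c!l])[i := b!i]"
          using 2(2) by (rule arg_cong[where f="\<lambda>z. z[i:=b!i]"])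
        then have "c[i := b!i] = a[i := b!i]" using True by simp
        then show ?thesis using IH by simp
      next
        case False
        show ?thesis
        proof (cases "a!i = b!i")
          case True then show ?thesis using aS by (metis list_update_id)
        next
          case False2: False
          obtain x where cx: "c = a[l := x]" "a!l \<noteq> x" using 2(2,3) by blast
          have d2: "dist a (c[i := b!i]) = 2"
            unfolding cx(1) using 2(1) il False False2 cx(2) by (intro dist_two_upd) auto
          have "sw i a (c[i := b!i]) \<in> S" using sw aS IH d2 i
            unfolding switchable_def by blast
          moreover have "sw i a (c[i := b!i]) = a[i := b!i]"
            using il la by (simp add: sw_def)
          ultimately show ?thesis by simp
        qed
      qed
    qed
  qed
qed


lemma keys_add_nat: "Poly_Mapping.keys ((m1::'a \<Rightarrow>\<^sub>0 nat) + m2) = Poly_Mapping.keys m1 \<union> Poly_Mapping.keys m2"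
  by (auto simp: in_keys_iff lookup_add)

lemma polyR_iff: "p \<in> polyR r \<longleftrightarrow> (\<forall>m \<in> Poly_Mapping.keys p. Poly_Mapping.keys m \<subseteq> gridN r)"
  by (simp add: polyR_def)

lemma polyR_zero[simp]: "0 \<in> polyR r"
  by (simp add: polyR_def)

lemma polyR_single: "Poly_Mapping.keys m \<subseteq> gridN r \<Longrightarrow> Poly_Mapping.single m c \<in> polyR r"
  by (simp add: polyR_def)

lemma polyR_const: "Poly_Mapping.single 0 c \<in> polyR r"
  by (simp add: polyR_def)

lemma polyR_one[simp]: "1 \<in> polyR r"
  by (simp add: polyR_def)

lemma polyR_add: "p \<in> polyR r \<Longrightarrow> q \<in> polyR r \<Longrightarrow> p + q \<in> polyR r"
  unfolding polyR_iff
proof (intro ballI)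
  fix m assume p: "\<forall>m\<in>Poly_Mapping.keys p. Poly_Mapping.keys m \<subseteq> gridN r"
    and q: "\<forall>m\<in>Poly_Mapping.keys q. Poly_Mapping.keys m \<subseteq> gridN r"
    and m: "m \<in> Poly_Mapping.keys (p + q)"
  have "m \<in> Poly_Mapping.keys p \<or> m \<in> Poly_Mapping.keys q" using m keys_add[of p q] by auto
  then show "Poly_Mapping.keys m \<subseteq> gridN r" using p q by auto
qed

lemma polyR_uminus: "p \<in> polyR r \<Longrightarrow> - p \<in> polyR r"
  unfolding polyR_iff keys_minus by assumption

lemma polyR_diff: "p \<in> polyR r \<Longrightarrow> q \<in> polyR r \<Longrightarrow> p - q \<in> polyR r"
  using polyR_add[of p r "- q"] polyR_uminus[of q r] by simp

lemma polyR_mult: "p \<in> polyR r \<Longrightarrow> q \<in> polyR r \<Longrightarrow> p * q \<in> polyR r"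
proof -
  assume p: "p \<in> polyR r" and q: "q \<in> polyR r"
  show ?thesis unfolding polyR_iff
  proof
    fix m assume "m \<in> Poly_Mapping.keys (p * q)"
    then obtain a b where "m = a + b" "a \<in> Poly_Mapping.keys p" "b \<in> Poly_Mapping.keys q" using keys_mult by blast
    then show "Poly_Mapping.keys m \<subseteq> gridN r" using p q by (auto simp: polyR_def keys_add_nat)
  qed
qed

lemma polyR_sum: "(\<And>x. x \<in> A \<Longrightarrow> f x \<in> polyR r) \<Longrightarrow> sum f A \<in> polyR r"
  by (induction A rule: infinite_finite_induct) (auto intro: polyR_add)

lemma Xv_R: "a \<in> gridN r \<Longrightarrow> Xv a \<in> polyR r"
  unfolding Xv_def by (rule polyR_single) simp

lemma ideal_inD:
  assumes "ideal_in R I"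
  shows "I \<subseteq> R" "0 \<in> I" "x \<in> I \<Longrightarrow> y \<in> I \<Longrightarrow> x + y \<in> I" "s \<in> R \<Longrightarrow> x \<in> I \<Longrightarrow> s * x \<in> I"
  using assms by (auto simp: ideal_in_def)

lemma ideal_mult_right: "ideal_in R I \<Longrightarrow> s \<in> R \<Longrightarrow> x \<in> I \<Longrightarrow> x * s \<in> I"
  by (metis ideal_inD(4) mult.commute)

lemma ideal_sum_closed:
  "ideal_in R I \<Longrightarrow> (\<And>x. x \<in> A \<Longrightarrow> f x \<in> I) \<Longrightarrow> sum f A \<in> I"
  by (induction A rule: infinite_finite_induct) (auto intro: ideal_inD)

lemma ideal_uminus:
  assumes "ideal_in (polyR r) I" "x \<in> I"
  shows "- x \<in> (I :: 'k::field mpoly set)"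
proof -
  have "(-1) * x \<in> I" using assms by (intro ideal_inD(4)) (auto intro: polyR_uminus)
  then show ?thesis by simp
qed

lemma ideal_diff:
  assumes "ideal_in (polyR r) I" "x \<in> I" "y \<in> I"
  shows "x - y \<in> (I :: 'k::field mpoly set)"
  using ideal_inD(3)[OF assms(1) assms(2) ideal_uminus[OF assms(1,3)]] by simp

lemma ideal_gen_ideal:
  assumes "G \<subseteq> polyR r"
  shows "ideal_in (polyR r) (ideal_gen (polyR r) (G :: 'k::field mpoly set))"
proof -
  have R: "ideal_in (polyR r) (polyR r :: 'k mpoly set)"
    by (auto simp: ideal_in_def intro: polyR_add polyR_mult)
  let ?F = "{I. ideal_in (polyR r) I \<and> G \<subseteq> I}"
  have F: "\<And>I. I \<in> ?F \<Longrightarrow> ideal_in (polyR r) I" by blast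
  have "\<Inter> ?F \<subseteq> polyR r" using R assms by blast
  moreover have "0 \<in> \<Inter> ?F" using F ideal_inD(2) by blast
  moreover have "\<forall>x\<in>\<Inter> ?F. \<forall>y\<in>\<Inter> ?F. x + y \<in> \<Inter> ?F" using F ideal_inD(3) by blast
  moreover have "\<forall>s\<in>polyR r. \<forall>x\<in>\<Inter> ?F. s * x \<in> \<Inter> ?F" using F ideal_inD(4) by blast
  ultimately show ?thesis unfolding ideal_gen_def ideal_in_def by blast
qed

lemma ideal_gen_sup: "G \<subseteq> ideal_gen R G"
  by (auto simp: ideal_gen_def)

lemma ideal_gen_least: "ideal_in R J \<Longrightarrow> G \<subseteq> J \<Longrightarrow> ideal_gen R G \<subseteq> J"
  by (auto simp: ideal_gen_def)

lemma ideal_sum_ideal: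
  assumes "ideal_in (polyR r) I" "ideal_in (polyR r) J"
  shows "ideal_in (polyR r) (ideal_sum I (J :: 'k::field mpoly set))"
  unfolding ideal_in_def ideal_sum_def
proof (intro conjI ballI)
  show "{x + y |x y. x \<in> I \<and> y \<in> J} \<subseteq> polyR r"
    using assms by (auto simp: ideal_in_def intro: polyR_add)
  show "0 \<in> {x + y |x y. x \<in> I \<and> y \<in> J}"
    using assms by (auto simp: ideal_in_def intro!: exI[of _ 0])
next
  fix u v assume "u \<in> {x + y |x y. x \<in> I \<and> y \<in> J}" "v \<in> {x + y |x y. x \<in> I \<and> y \<in> J}"
  then obtain x y x' y' where "u = x + y" "v = x' + y'" "x \<in> I" "y \<in> J" "x' \<in> I" "y' \<in> J" by blast
  moreover have "u + v = (x + x') + (y + y')" using \<open>u = x + y\<close> \<open>v = x' + y'\<close> by (simp add: algebra_simps)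
  moreover have "x + x' \<in> I" "y + y' \<in> J" using assms \<open>x \<in> I\<close> \<open>y \<in> J\<close> \<open>x' \<in> I\<close> \<open>y' \<in> J\<close>
    by (auto intro: ideal_inD(3))
  ultimately show "u + v \<in> {x + y |x y. x \<in> I \<and> y \<in> J}" by blast
next
  fix s :: "'k mpoly" and u assume s: "s \<in> polyR r" and "u \<in> {x + y |x y. x \<in> I \<and> y \<in> J}"
  then obtain x y where "u = x + y" "x \<in> I" "y \<in> J" by blast
  moreover have "s * u = s * x + s * y" using \<open>u = x + y\<close> by (simp add: algebra_simps)
  moreover have "s * x \<in> I" "s * y \<in> J" using assms s \<open>x \<in> I\<close> \<open>y \<in> J\<close>
    by (auto intro: ideal_inD(4))
  ultimately show "s * u \<in> {x + y |x y. x \<in> I \<and> y \<in> J}" by blast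
qed

lemma ideal_sum_left: "ideal_in R J \<Longrightarrow> I \<subseteq> ideal_sum I J"
  by (force simp: ideal_sum_def ideal_in_def)

lemma ideal_sum_right: "ideal_in R I \<Longrightarrow> J \<subseteq> ideal_sum I J"
  by (force simp: ideal_sum_def ideal_in_def)

lemma ideal_sum_least: "ideal_in R K \<Longrightarrow> I \<subseteq> K \<Longrightarrow> J \<subseteq> K \<Longrightarrow> ideal_sum I J \<subseteq> K"
  unfolding ideal_sum_def ideal_in_def by blast

lemma fpol_R:
  assumes "a \<in> gridN r" "b \<in> gridN r"
  shows "fpol i a b \<in> polyR r"
  unfolding fpol_def using assms
  by (intro polyR_diff polyR_mult Xv_R sw_gridN) auto

lemma Igens_R: "{fpol i a b | i a b. a \<in> gridN r \<and> b \<in> gridN r \<and> dist a b = 2 \<and> i < t} \<subseteq> (polyR r :: 'k::field mpoly set)"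
  using fpol_R by blast

lemma Tgens_R:
  assumes "S \<subseteq> gridN r"
  shows "{fpol i a b | i a b. i < t \<and> connected_in S a b} \<subseteq> (polyR r :: 'k::field mpoly set)"
  using fpol_R assms conn_mem by blast

lemma Vgens_R: "{Xv a | a. a \<in> gridN r \<and> a \<notin> S} \<subseteq> (polyR r :: 'k::field mpoly set)"
  using Xv_R by blast

lemma Iideal_ideal: "ideal_in (polyR r) (Iideal r t :: 'k::field mpoly set)"
  unfolding Iideal_def by (rule ideal_gen_ideal[OF Igens_R])

lemma Itilde_ideal: "S \<subseteq> gridN r \<Longrightarrow> ideal_in (polyR r) (Itilde r t S :: 'k::field mpoly set)"
  unfolding Itilde_def by (rule ideal_gen_ideal[OF Tgens_R])

lemma VarS_ideal: "ideal_in (polyR r) (VarS r S :: 'k::field mpoly set)"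
  unfolding VarS_def by (rule ideal_gen_ideal[OF Vgens_R])

lemma PS_ideal: "S \<subseteq> gridN r \<Longrightarrow> ideal_in (polyR r) (PS r t S :: 'k::field mpoly set)"
  unfolding PS_def by (intro ideal_sum_ideal VarS_ideal Itilde_ideal)

lemma fpol_in_Itilde:
  "S \<subseteq> gridN r \<Longrightarrow> i < t \<Longrightarrow> connected_in S a b \<Longrightarrow> (fpol i a b :: 'k::field mpoly) \<in> Itilde r t S"
  unfolding Itilde_def by (rule subsetD[OF ideal_gen_sup]) blast

lemma fpol_in_Iideal:
  "a \<in> gridN r \<Longrightarrow> b \<in> gridN r \<Longrightarrow> dist a b = 2 \<Longrightarrow> i < t \<Longrightarrow> (fpol i a b :: 'k::field mpoly) \<in> Iideal r t"
  unfolding Iideal_def by (rule subsetD[OF ideal_gen_sup]) blast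

lemma Xv_in_VarS:
  "a \<in> gridN r \<Longrightarrow> a \<notin> S \<Longrightarrow> (Xv a :: 'k::field mpoly) \<in> VarS r S"
  unfolding VarS_def by (rule subsetD[OF ideal_gen_sup]) blast

lemma Itilde_sub_PS: "S \<subseteq> gridN r \<Longrightarrow> (Itilde r t S :: 'k::field mpoly set) \<subseteq> PS r t S"
  unfolding PS_def by (rule ideal_sum_right[OF VarS_ideal])

lemma VarS_sub_PS: "S \<subseteq> gridN r \<Longrightarrow> (VarS r S :: 'k::field mpoly set) \<subseteq> PS r t S"
  unfolding PS_def by (rule ideal_sum_left[OF Itilde_ideal])

lemma PS_least:
  assumes "S \<subseteq> gridN r" "ideal_in (polyR r) K"
    "\<And>a. a \<in> gridN r \<Longrightarrow> a \<notin> S \<Longrightarrow> Xv a \<in> K"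
    "\<And>i a b. i < t \<Longrightarrow> connected_in S a b \<Longrightarrow> fpol i a b \<in> K"
  shows "PS r t S \<subseteq> (K :: 'k::field mpoly set)"
  unfolding PS_def
proof (rule ideal_sum_least[OF assms(2)])
  show "VarS r S \<subseteq> K" unfolding VarS_def using assms by (intro ideal_gen_least) auto
  show "Itilde r t S \<subseteq> K" unfolding Itilde_def using assms by (intro ideal_gen_least) auto
qed

lemma Iideal_least:
  assumes "ideal_in (polyR r) K"
    "\<And>i a b. a \<in> gridN r \<Longrightarrow> b \<in> gridN r \<Longrightarrow> dist a b = 2 \<Longrightarrow> i < t \<Longrightarrow> fpol i a b \<in> K"
  shows "Iideal r t \<subseteq> (K :: 'k::field mpoly set)"
  unfolding Iideal_def using assms by (intro ideal_gen_least) auto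


definition rep :: "nat list set \<Rightarrow> nat list \<Rightarrow> nat list" where
  "rep S a = (SOME y. connected_in S a y)"
definition Yk :: "nat list set \<Rightarrow> nat list \<Rightarrow> nat \<Rightarrow> nat \<Rightarrow> nat list" where
  "Yk S a j v = 0 # j # v # rep S a"
definition Zk :: "nat list set \<Rightarrow> nat \<Rightarrow> nat list \<Rightarrow> nat list" where
  "Zk S t a = Suc 0 # rep S a @ drop t a"
definition E :: "nat list set \<Rightarrow> nat \<Rightarrow> nat list \<Rightarrow> (nat list \<Rightarrow>\<^sub>0 nat)" where
  "E S t a = (\<Sum>j<t. Poly_Mapping.single (Yk S a j (a!j)) 1) + Poly_Mapping.single (Zk S t a) 1"
definition Phi :: "nat list set \<Rightarrow> nat \<Rightarrow> (nat list \<Rightarrow>\<^sub>0 nat) \<Rightarrow> (nat list \<Rightarrow>\<^sub>0 nat)" where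
  "Phi S t m = Abs_poly_mapping (\<lambda>v. \<Sum>a\<in>Poly_Mapping.keys m. Poly_Mapping.lookup m a * Poly_Mapping.lookup (E S t a) v)"
definition phi :: "nat list set \<Rightarrow> nat \<Rightarrow> 'k::field mpoly \<Rightarrow> 'k mpoly" where
  "phi S t f = (\<Sum>m\<in>Poly_Mapping.keys f. Poly_Mapping.single (Phi S t m)
      (if Poly_Mapping.keys m \<subseteq> S then Poly_Mapping.lookup f m else 0))"

lemma lookup_Phi: "Poly_Mapping.lookup (Phi S t m) v =
   (\<Sum>a\<in>Poly_Mapping.keys m. Poly_Mapping.lookup m a * Poly_Mapping.lookup (E S t a) v)"
proof -
  have "{v. (\<Sum>a\<in>Poly_Mapping.keys m. Poly_Mapping.lookup m a * Poly_Mapping.lookup (E S t a) v) \<noteq> 0}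
     \<subseteq> (\<Union>a\<in>Poly_Mapping.keys m. Poly_Mapping.keys (E S t a))"
  proof
    fix v assume "v \<in> {v. (\<Sum>a\<in>Poly_Mapping.keys m. Poly_Mapping.lookup m a * Poly_Mapping.lookup (E S t a) v) \<noteq> 0}"
    then obtain a where "a \<in> Poly_Mapping.keys m" "Poly_Mapping.lookup m a * Poly_Mapping.lookup (E S t a) v \<noteq> 0"
      by (metis (mono_tags, lifting) mem_Collect_eq sum.neutral)
    then show "v \<in> (\<Union>a\<in>Poly_Mapping.keys m. Poly_Mapping.keys (E S t a))" by (auto simp: in_keys_iff)
  qed
  then have "finite {v. (\<Sum>a\<in>Poly_Mapping.keys m. Poly_Mapping.lookup m a * Poly_Mapping.lookup (E S t a) v) \<noteq> 0}"
    by (rule finite_subset) simp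
  then show ?thesis unfolding Phi_def by simp
qed

lemma sum_keys_sup:
  fixes m :: "'a \<Rightarrow>\<^sub>0 nat"
  assumes "finite A" "Poly_Mapping.keys m \<subseteq> A"
  shows "(\<Sum>a\<in>Poly_Mapping.keys m. Poly_Mapping.lookup m a * g a) = (\<Sum>a\<in>A. Poly_Mapping.lookup m a * g a)"
  by (rule sum.mono_neutral_left[OF assms]) (auto simp: in_keys_iff)

lemma Phi_add: "Phi S t (m1 + m2) = Phi S t m1 + Phi S t m2"
proof (rule poly_mapping_eqI)
  fix v
  let ?A = "Poly_Mapping.keys m1 \<union> Poly_Mapping.keys m2"
  have "Poly_Mapping.lookup (Phi S t (m1 + m2)) v
     = (\<Sum>a\<in>?A. Poly_Mapping.lookup (m1 + m2) a * Poly_Mapping.lookup (E S t a) v)"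
    unfolding lookup_Phi by (rule sum_keys_sup) (auto simp: keys_add_nat)
  also have "\<dots> = (\<Sum>a\<in>?A. Poly_Mapping.lookup m1 a * Poly_Mapping.lookup (E S t a) v)
      + (\<Sum>a\<in>?A. Poly_Mapping.lookup m2 a * Poly_Mapping.lookup (E S t a) v)"
    by (simp add: lookup_add algebra_simps sum.distrib)
  also have "\<dots> = Poly_Mapping.lookup (Phi S t m1) v + Poly_Mapping.lookup (Phi S t m2) v"
    unfolding lookup_Phi by (subst (1 2) sum_keys_sup[where A="?A"]) auto
  finally show "Poly_Mapping.lookup (Phi S t (m1 + m2)) v = Poly_Mapping.lookup (Phi S t m1 + Phi S t m2) v"
    by (simp add: lookup_add)
qed

lemma Phi_zero[simp]: "Phi S t 0 = 0"
  by (rule poly_mapping_eqI) (simp add: lookup_Phi)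

lemma Phi_single: "Phi S t (Poly_Mapping.single a 1) = E S t a"
  by (rule poly_mapping_eqI) (simp add: lookup_Phi)

lemma phi_sup:
  assumes "finite A" "Poly_Mapping.keys f \<subseteq> A"
  shows "phi S t f = (\<Sum>m\<in>A. Poly_Mapping.single (Phi S t m)
      (if Poly_Mapping.keys m \<subseteq> S then Poly_Mapping.lookup f m else 0))"
  unfolding phi_def by (rule sum.mono_neutral_left[OF assms]) (auto simp: in_keys_iff)

lemma phi_add: "phi S t (f + g) = phi S t f + phi S t (g :: 'k::field mpoly)"
proof -
  let ?A = "Poly_Mapping.keys f \<union> Poly_Mapping.keys g"
  have "phi S t (f + g) = (\<Sum>m\<in>?A. Poly_Mapping.single (Phi S t m)
      (if Poly_Mapping.keys m \<subseteq> S then Poly_Mapping.lookup (f + g) m else 0))"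
    by (rule phi_sup) (use keys_add[of f g] in auto)
  also have "\<dots> = (\<Sum>m\<in>?A. Poly_Mapping.single (Phi S t m)
      (if Poly_Mapping.keys m \<subseteq> S then Poly_Mapping.lookup f m else 0)) +
     (\<Sum>m\<in>?A. Poly_Mapping.single (Phi S t m)
      (if Poly_Mapping.keys m \<subseteq> S then Poly_Mapping.lookup g m else 0))"
    unfolding sum.distrib[symmetric] by (intro sum.cong refl) (auto simp: lookup_add single_add)
  also have "\<dots> = phi S t f + phi S t g"
    by (subst (1 2) phi_sup[where A="?A"]) auto
  finally show ?thesis .
qed

lemma phi_zero[simp]: "phi S t (0 :: 'k::field mpoly) = 0"
  by (simp add: phi_def)

lemma phi_sum: "phi S t (sum (F :: _ \<Rightarrow> 'k::field mpoly) A) = (\<Sum>x\<in>A. phi S t (F x))"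
  by (induction A rule: infinite_finite_induct) (auto simp: phi_add)

lemma phi_single: "phi S t (Poly_Mapping.single m (c::'k::field)) =
   Poly_Mapping.single (Phi S t m) (if Poly_Mapping.keys m \<subseteq> S then c else 0)"
  by (cases "c = 0") (auto simp: phi_def)

lemma poly_sum_single: "f = (\<Sum>m\<in>Poly_Mapping.keys f. Poly_Mapping.single m (Poly_Mapping.lookup f m))"
proof (rule poly_mapping_eqI)
  fix k
  have "Poly_Mapping.lookup (\<Sum>m\<in>Poly_Mapping.keys f. Poly_Mapping.single m (Poly_Mapping.lookup f m)) k
     = (\<Sum>m\<in>Poly_Mapping.keys f. if m = k then Poly_Mapping.lookup f m else 0)"
    by (simp add: lookup_sum lookup_single when_def)
  also have "\<dots> = Poly_Mapping.lookup f k"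
    by (simp add: in_keys_iff)
  finally show "Poly_Mapping.lookup f k = Poly_Mapping.lookup (\<Sum>m\<in>Poly_Mapping.keys f. Poly_Mapping.single m (Poly_Mapping.lookup f m)) k"
    by simp
qed

lemma phi_mult_single:
  "phi S t (Poly_Mapping.single m c * Poly_Mapping.single m' c') =
   phi S t (Poly_Mapping.single m (c::'k::field)) * phi S t (Poly_Mapping.single m' c')"
  by (simp add: mult_single phi_single Phi_add keys_add_nat)

lemma phi_mult: "phi S t (f * g) = phi S t f * phi S t (g :: 'k::field mpoly)"
proof -
  let ?s = "\<lambda>m. Poly_Mapping.single m (Poly_Mapping.lookup f m)"
  let ?u = "\<lambda>m. Poly_Mapping.single m (Poly_Mapping.lookup g m)"
  have "f * g = (\<Sum>m\<in>Poly_Mapping.keys f. ?s m) * (\<Sum>m\<in>Poly_Mapping.keys g. ?u m)"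
    using poly_sum_single[of f] poly_sum_single[of g] by simp
  also have "\<dots> = (\<Sum>m\<in>Poly_Mapping.keys f. \<Sum>m'\<in>Poly_Mapping.keys g. ?s m * ?u m')"
    by (rule sum_product)
  finally have "phi S t (f * g) = (\<Sum>m\<in>Poly_Mapping.keys f. \<Sum>m'\<in>Poly_Mapping.keys g. phi S t (?s m) * phi S t (?u m'))"
    by (simp add: phi_sum phi_mult_single)
  also have "\<dots> = (\<Sum>m\<in>Poly_Mapping.keys f. phi S t (?s m)) * (\<Sum>m\<in>Poly_Mapping.keys g. phi S t (?u m))"
    by (rule sum_product[symmetric])
  also have "\<dots> = phi S t f * phi S t g"
    using poly_sum_single[of f] poly_sum_single[of g] by (simp add: phi_sum[symmetric])
  finally show ?thesis .
qed

lemma phi_one[simp]: "phi S t (1 :: 'k::field mpoly) = 1"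
  by (simp add: phi_def lookup_one)

lemma phi_Xv: "phi S t (Xv a :: 'k::field mpoly) = (if a \<in> S then Poly_Mapping.single (E S t a) 1 else 0)"
  unfolding Xv_def phi_single Phi_single by simp

lemma lookup_phi: "Poly_Mapping.lookup (phi S t (f :: 'k::field mpoly)) k =
  (\<Sum>m\<in>Poly_Mapping.keys f. if Poly_Mapping.keys m \<subseteq> S \<and> Phi S t m = k then Poly_Mapping.lookup f m else 0)"
  unfolding phi_def lookup_sum by (intro sum.cong) (auto simp: lookup_single when_def)


definition Qs :: "nat list \<Rightarrow> nat \<Rightarrow> nat list set \<Rightarrow> 'k::field mpoly set" where
  "Qs r t S = {f \<in> polyR r. phi S t f = 0}"

lemma Qs_prime: "prime_in (polyR r) (Qs r t S :: 'k::field mpoly set)"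
  unfolding prime_in_def ideal_in_def Qs_def
proof (intro conjI ballI impI)
  show "{f \<in> polyR r. phi S t f = 0} \<noteq> (polyR r :: 'k mpoly set)"
  proof
    assume "{f \<in> polyR r. phi S t f = 0} = (polyR r :: 'k mpoly set)"
    then have "(1::'k mpoly) \<in> {f \<in> polyR r. phi S t f = 0}" using polyR_one[of r] by simp
    then show False by simp
  qed
next
  fix a b :: "'k mpoly" assume "a \<in> polyR r" "b \<in> polyR r" "a * b \<in> {f \<in> polyR r. phi S t f = 0}"
  then show "a \<in> {f \<in> polyR r. phi S t f = 0} \<or> b \<in> {f \<in> polyR r. phi S t f = 0}"
    by (auto simp: phi_mult)
qed (auto simp: phi_add phi_mult intro: polyR_add polyR_mult)

lemma Qs_ideal: "ideal_in (polyR r) (Qs r t S :: 'k::field mpoly set)"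
  using Qs_prime[of r t S] unfolding prime_in_def by blast

lemma phi_uminus: "phi S t (- f) = - phi S t (f :: 'k::field mpoly)"
proof -
  have "phi S t f + phi S t (- f) = 0" using phi_add[of S t f "- f"] by simp
  then show ?thesis by (simp add: eq_neg_iff_add_eq_0 add.commute)
qed

lemma phi_diff: "phi S t (f - g) = phi S t f - phi S t (g :: 'k::field mpoly)"
  using phi_add[of S t f "- g"] phi_uminus[of S t g] by simp

context
  fixes r :: "nat list" and t :: nat and S :: "nat list set"
  assumes sw: "switchable r t S" and tn: "t \<le> length r"
begin

lemma Ssub: "S \<subseteq> gridN r"
  using sw by (simp add: switchable_def)

lemma S_len: "a \<in> S \<Longrightarrow> length a = length r"
  using Ssub gridN_length by blast

lemma rep_conn: "a \<in> S \<Longrightarrow> connected_in S a (rep S a)"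
  unfolding rep_def by (rule someI[of _ a]) (rule conn_refl)

lemma rep_eq: "connected_in S a b \<Longrightarrow> rep S a = rep S b"
proof -
  assume ab: "connected_in S a b"
  have "(\<lambda>y. connected_in S a y) = (\<lambda>y. connected_in S b y)"
  proof
    fix y
    have ba: "connected_in S b a" by (rule conn_sym[OF Ssub ab])
    show "connected_in S a y = connected_in S b y"
    proof
      assume "connected_in S a y" then show "connected_in S b y" by (rule conn_trans[OF ba])
    next
      assume "connected_in S b y" then show "connected_in S a y" by (rule conn_trans[OF ab])
    qed
  qed
  then show ?thesis unfolding rep_def by simp
qed

lemma rep_inj: "a \<in> S \<Longrightarrow> b \<in> S \<Longrightarrow> rep S a = rep S b \<Longrightarrow> connected_in S a b"
proof -
  assume a: "a \<in> S" and b: "b \<in> S" and e: "rep S a = rep S b"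
  have 1: "connected_in S a (rep S a)" by (rule rep_conn[OF a])
  have "connected_in S b (rep S a)" using rep_conn[OF b] e by simp
  then have 2: "connected_in S (rep S a) b" by (rule conn_sym[OF Ssub])
  show ?thesis by (rule conn_trans[OF 1 2])
qed

lemma rep_len: "a \<in> S \<Longrightarrow> length (rep S a) = length r"
  using conn_mem[OF rep_conn] S_len by simp

lemma CL': "connected_in S a b \<Longrightarrow> i < t \<Longrightarrow> a[i := b!i] \<in> S"
  by (rule CL[OF sw _ _ tn])

lemma sw_conn: "connected_in S a b \<Longrightarrow> i < t \<Longrightarrow> connected_in S a (a[i := b!i])"
proof -
  assume ab: "connected_in S a b" and i: "i < t"
  have "a \<in> S" using conn_mem[OF ab] by simp
  moreover have "a[i := b!i] \<in> S" by (rule CL'[OF ab i])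
  ultimately show ?thesis using dist_upd1 by (intro conn_adj)
qed

lemma Zk_inj:
  assumes "a \<in> S" "b \<in> S" "Zk S t a = Zk S t b"
  shows "rep S a = rep S b" "drop t a = drop t b"
proof -
  have "rep S a @ drop t a = rep S b @ drop t b" using assms(3) by (simp add: Zk_def)
  moreover have "length (rep S a) = length (rep S b)" using rep_len assms by simp
  ultimately show "rep S a = rep S b" "drop t a = drop t b" by auto
qed

lemma lookup_E: "Poly_Mapping.lookup (E S t a) k =
   (\<Sum>j<t. if Yk S a j (a!j) = k then (1::nat) else 0) + (if Zk S t a = k then 1 else 0)"
  unfolding E_def lookup_add lookup_sum lookup_single when_def by simp

lemma E_pos_cases:
  assumes "Poly_Mapping.lookup (E S t a) k \<noteq> 0"
  shows "(\<exists>j<t. k = Yk S a j (a!j)) \<or> k = Zk S t a"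
proof (rule ccontr)
  assume "\<not> ?thesis"
  then have "Poly_Mapping.lookup (E S t a) k = 0" unfolding lookup_E by (auto intro!: sum.neutral)
  then show False using assms by simp
qed

lemma E_Z: "Poly_Mapping.lookup (E S t a) (Zk S t a) \<ge> 1"
  unfolding lookup_E by simp

lemma E_Y: "j < t \<Longrightarrow> Poly_Mapping.lookup (E S t a) (Yk S a j (a!j)) \<ge> 1"
proof -
  assume j: "j < t"
  have "(1::nat) \<le> (\<Sum>j'<t. if Yk S a j' (a!j') = Yk S a j (a!j) then 1 else 0)"
    using member_le_sum[of j "{..<t}" "\<lambda>j'. if Yk S a j' (a!j') = Yk S a j (a!j) then (1::nat) else 0"] j
    by simp
  then show ?thesis unfolding lookup_E by linarith
qed

lemma Phi_ge: "a \<in> Poly_Mapping.keys U \<Longrightarrow> Poly_Mapping.lookup (E S t a) k \<ge> 1 \<Longrightarrow>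
   Poly_Mapping.lookup (Phi S t U) k \<ge> 1"
proof -
  assume a: "a \<in> Poly_Mapping.keys U" and e: "Poly_Mapping.lookup (E S t a) k \<ge> 1"
  have "Poly_Mapping.lookup U a * Poly_Mapping.lookup (E S t a) k \<le> Poly_Mapping.lookup (Phi S t U) k"
    unfolding lookup_Phi using a by (intro member_le_sum) auto
  moreover have "Poly_Mapping.lookup U a \<ge> 1" using a by (simp add: in_keys_iff)
  moreover have "1 \<le> Poly_Mapping.lookup U a * Poly_Mapping.lookup (E S t a) k"
    using mult_le_mono[OF \<open>Poly_Mapping.lookup U a \<ge> 1\<close> e] by simp
  ultimately show ?thesis by linarith
qed

lemma Phi_pos_obtain:
  assumes "Poly_Mapping.lookup (Phi S t V) k \<ge> 1"
  obtains c where "c \<in> Poly_Mapping.keys V" "Poly_Mapping.lookup (E S t c) k \<noteq> 0"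
proof -
  have "(\<Sum>a\<in>Poly_Mapping.keys V. Poly_Mapping.lookup V a * Poly_Mapping.lookup (E S t a) k) \<noteq> 0"
  proof
    assume "(\<Sum>a\<in>Poly_Mapping.keys V. Poly_Mapping.lookup V a * Poly_Mapping.lookup (E S t a) k) = 0"
    then have "Poly_Mapping.lookup (Phi S t V) k = 0" unfolding lookup_Phi .
    then show False using assms by simp
  qed
  then obtain c where "c \<in> Poly_Mapping.keys V" "Poly_Mapping.lookup V c * Poly_Mapping.lookup (E S t c) k \<noteq> 0"
    by (rule sum.not_neutral_contains_not_neutral)
  then show ?thesis using that by simp
qed

lemma E_swap:
  assumes bc: "connected_in S b c" and i: "i < t"
  shows "E S t (b[i := c!i]) + E S t (c[i := b!i]) = E S t b + E S t c"
proof -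
  have cb: "connected_in S c b" using conn_sym[OF Ssub bc] .
  have r1: "rep S (b[i := c!i]) = rep S b" using rep_eq[OF sw_conn[OF bc i]] by simp
  have r2: "rep S (c[i := b!i]) = rep S c" using rep_eq[OF sw_conn[OF cb i]] by simp
  have r3: "rep S c = rep S b" using rep_eq[OF bc] by simp
  have lb: "length b = length r" "length c = length r" using bc conn_mem S_len by blast+
  have il: "i < length b" "i < length c" using lb i tn by auto
  have Z1: "Zk S t (b[i := c!i]) = Zk S t b" using r1 i by (simp add: Zk_def)
  have Z2: "Zk S t (c[i := b!i]) = Zk S t c" using r2 i by (simp add: Zk_def)
  let ?y = "\<lambda>j v. Poly_Mapping.single (Yk S b j v) (1::nat)"
  have Y1: "\<And>j v. Yk S (b[i := c!i]) j v = Yk S b j v" using r1 by (simp add: Yk_def)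
  have Y2: "\<And>j v. Yk S (c[i := b!i]) j v = Yk S b j v" using r2 r3 by (simp add: Yk_def)
  have Y3: "\<And>j v. Yk S c j v = Yk S b j v" using r3 by (simp add: Yk_def)
  have per: "?y j ((b[i := c!i])!j) + ?y j ((c[i := b!i])!j) = ?y j (b!j) + ?y j (c!j)" for j
    using il by (cases "j = i") (auto simp: add.commute)
  have "(\<Sum>j<t. ?y j ((b[i := c!i])!j)) + (\<Sum>j<t. ?y j ((c[i := b!i])!j))
      = (\<Sum>j<t. ?y j (b!j)) + (\<Sum>j<t. ?y j (c!j))"
    unfolding sum.distrib[symmetric] using per by simp
  then show ?thesis
    unfolding E_def Z1 Z2 Y1 Y2 Y3 by (simp add: ac_simps)
qed

lemma phi_fpol:
  assumes "connected_in S a b" "i < t"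
  shows "phi S t (fpol i a b :: 'k::field mpoly) = 0"
proof -
  have ba: "connected_in S b a" using conn_sym[OF Ssub assms(1)] .
  have inS: "a \<in> S" "b \<in> S" "a[i := b!i] \<in> S" "b[i := a!i] \<in> S"
    using assms conn_mem CL'[OF assms] CL'[OF ba assms(2)] by auto
  have "E S t a + E S t b = E S t (a[i := b!i]) + E S t (b[i := a!i])"
    using E_swap[OF assms] by simp
  then have "phi S t (Xv a * Xv b :: 'k mpoly) = phi S t (Xv (a[i := b!i]) * Xv (b[i := a!i]))"
    using inS by (simp add: phi_mult phi_Xv mult_single)
  then show ?thesis unfolding fpol_def sw_def by (simp add: phi_diff)
qed

end


definition mon :: "(nat list \<Rightarrow>\<^sub>0 nat) \<Rightarrow> 'k::field mpoly" where
  "mon U = Poly_Mapping.single U 1"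

definition deg :: "(nat list \<Rightarrow>\<^sub>0 nat) \<Rightarrow> nat" where
  "deg U = (\<Sum>k\<in>Poly_Mapping.keys U. Poly_Mapping.lookup U k)"

lemma mon_add: "(mon (U1 + U2) :: 'k::field mpoly) = mon U1 * mon U2"
  by (simp add: mon_def mult_single)

lemma mon_single: "(mon (Poly_Mapping.single a 1) :: 'k::field mpoly) = Xv a"
  by (simp add: mon_def Xv_def)

lemma mon_R: "Poly_Mapping.keys U \<subseteq> gridN r \<Longrightarrow> (mon U :: 'k::field mpoly) \<in> polyR r"
  unfolding mon_def by (rule polyR_single)

lemma deg_add: "deg (U + W) = deg U + deg W"
proof -
  let ?A = "Poly_Mapping.keys U \<union> Poly_Mapping.keys W"
  have s: "\<And>X. Poly_Mapping.keys X \<subseteq> ?A \<Longrightarrow> deg X = (\<Sum>k\<in>?A. Poly_Mapping.lookup X k)"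
    unfolding deg_def by (rule sum.mono_neutral_left) (auto simp: in_keys_iff)
  have "deg (U + W) = (\<Sum>k\<in>?A. Poly_Mapping.lookup (U + W) k)" by (rule s) (simp add: keys_add_nat)
  also have "\<dots> = (\<Sum>k\<in>?A. Poly_Mapping.lookup U k) + (\<Sum>k\<in>?A. Poly_Mapping.lookup W k)"
    by (simp add: lookup_add sum.distrib)
  also have "\<dots> = deg U + deg W" using s[of U] s[of W] by simp
  finally show ?thesis .
qed

lemma deg_single: "deg (Poly_Mapping.single a 1) = 1"
  by (simp add: deg_def)

lemma deg_zero: "deg U = 0 \<Longrightarrow> U = 0"
proof -
  assume "deg U = 0"
  then have "\<forall>k\<in>Poly_Mapping.keys U. Poly_Mapping.lookup U k = 0" unfolding deg_def by simp
  then show "U = 0" by (intro poly_mapping_eqI) (auto simp: in_keys_iff)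
qed

lemma decomp:
  fixes V :: "nat list \<Rightarrow>\<^sub>0 nat"
  assumes "a \<in> Poly_Mapping.keys V"
  obtains V1 where "V = Poly_Mapping.single a 1 + V1" "Poly_Mapping.keys V1 \<subseteq> Poly_Mapping.keys V"
    "\<And>k. k \<noteq> a \<Longrightarrow> Poly_Mapping.lookup V1 k = Poly_Mapping.lookup V k"
proof -
  let ?V1 = "V - Poly_Mapping.single a 1"
  have l: "Poly_Mapping.lookup ?V1 k = Poly_Mapping.lookup V k - (if k = a then 1 else 0)" for k
    by (simp add: lookup_minus lookup_single when_def)
  have "V = Poly_Mapping.single a 1 + ?V1"
  proof (rule poly_mapping_eqI)
    fix k
    have "Poly_Mapping.lookup V a \<ge> 1" using assms by (simp add: in_keys_iff)
    have "Poly_Mapping.lookup (Poly_Mapping.single a 1 + ?V1) k =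
      (if k = a then 1 else 0) + (Poly_Mapping.lookup V k - (if k = a then 1 else 0))"
      unfolding lookup_add l by (simp add: lookup_single when_def)
    then show "Poly_Mapping.lookup V k = Poly_Mapping.lookup (Poly_Mapping.single a 1 + ?V1) k"
      using \<open>Poly_Mapping.lookup V a \<ge> 1\<close> by (cases "k = a") auto
  qed
  moreover have "Poly_Mapping.keys ?V1 \<subseteq> Poly_Mapping.keys V"
  proof
    fix x assume "x \<in> Poly_Mapping.keys ?V1"
    then have "Poly_Mapping.lookup ?V1 x \<noteq> 0" by (simp only: in_keys_iff not_False_eq_True)
    then have "Poly_Mapping.lookup V x \<noteq> 0" unfolding l by (auto split: if_splits)
    then show "x \<in> Poly_Mapping.keys V" by (simp add: in_keys_iff)
  qed
  moreover have "\<And>k. k \<noteq> a \<Longrightarrow> Poly_Mapping.lookup ?V1 k = Poly_Mapping.lookup V k"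
    unfolding l by simp
  ultimately show ?thesis using that by blast
qed

lemmas Phi_single' = Phi_single[simplified]
lemmas mon_single' = mon_single[simplified]

lemma keys_single1_add: "Poly_Mapping.keys (Poly_Mapping.single a (1::nat) + V) = insert a (Poly_Mapping.keys V)"
  by (simp add: keys_add_nat)

context
  fixes r :: "nat list" and t :: nat and S :: "nat list set"
  assumes sw: "switchable r t S" and tn: "t \<le> length r"
begin

abbreviation J :: "'k::field mpoly set" where "J \<equiv> Itilde r t S"

lemma J_ideal: "ideal_in (polyR r) (J :: 'k::field mpoly set)"
  using Itilde_ideal[OF Ssub[OF sw tn]] .

lemma monS_R: "Poly_Mapping.keys U \<subseteq> S \<Longrightarrow> (mon U :: 'k::field mpoly) \<in> polyR r"
  using Ssub[OF sw tn] by (intro mon_R) auto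

lemma move:
  assumes V: "Poly_Mapping.keys V \<subseteq> S" and b: "b \<in> Poly_Mapping.keys V" and c: "c \<in> Poly_Mapping.keys V"
    and bc: "b \<noteq> c" and conn: "connected_in S b c" and i: "i < t"
  obtains V' where "Poly_Mapping.keys V' \<subseteq> S" "Phi S t V' = Phi S t V" "b[i := c!i] \<in> Poly_Mapping.keys V'"
    "mon V - mon V' \<in> (J :: 'k::field mpoly set)"
proof -
  obtain V1 where V1: "V = Poly_Mapping.single b 1 + V1" "Poly_Mapping.keys V1 \<subseteq> Poly_Mapping.keys V"
    "\<And>k. k \<noteq> b \<Longrightarrow> Poly_Mapping.lookup V1 k = Poly_Mapping.lookup V k"
    using decomp[OF b] by blast
  have c1: "c \<in> Poly_Mapping.keys V1" using V1(3)[of c] bc c by (simp add: in_keys_iff)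
  obtain V2 where V2: "V1 = Poly_Mapping.single c 1 + V2" "Poly_Mapping.keys V2 \<subseteq> Poly_Mapping.keys V1"
    using decomp[OF c1] by blast
  define b' where "b' = b[i := c!i]"
  define c' where "c' = c[i := b!i]"
  define V' where "V' = Poly_Mapping.single b' 1 + (Poly_Mapping.single c' 1 + V2)"
  have cb: "connected_in S c b" using conn_sym[OF Ssub[OF sw tn] conn] .
  have b'S: "b' \<in> S" unfolding b'_def by (rule CL'[OF sw tn conn i])
  have c'S: "c' \<in> S" unfolding c'_def by (rule CL'[OF sw tn cb i])
  have V'S: "Poly_Mapping.keys V' \<subseteq> S"
    unfolding V'_def keys_single1_add using b'S c'S V2(2) V1(2) V by blast
  have VV: "V = Poly_Mapping.single b 1 + (Poly_Mapping.single c 1 + V2)" using V1(1) V2(1) by simp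
  have "Phi S t V' = (E S t b' + E S t c') + Phi S t V2"
    unfolding V'_def by (simp add: Phi_add Phi_single Phi_single' add.assoc)
  also have "\<dots> = (E S t b + E S t c) + Phi S t V2"
    unfolding b'_def c'_def using E_swap[OF sw tn conn i] by simp
  also have "\<dots> = Phi S t V" unfolding VV by (simp add: Phi_add Phi_single Phi_single' add.assoc)
  finally have PV: "Phi S t V' = Phi S t V" .
  have b'V: "b' \<in> Poly_Mapping.keys V'" unfolding V'_def keys_single1_add by simp
  have V2S: "Poly_Mapping.keys V2 \<subseteq> S" using V2(2) V1(2) V by blast
  have "(mon V :: 'k mpoly) - mon V' = mon V2 * (Xv b * Xv c - Xv b' * Xv c')"
    unfolding VV V'_def by (simp add: mon_add mon_single mon_single' algebra_simps)
  also have "\<dots> = mon V2 * fpol i b c" by (simp add: fpol_def sw_def b'_def c'_def)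
  finally have "(mon V :: 'k mpoly) - mon V' = mon V2 * fpol i b c" .
  moreover have "mon V2 * fpol i b c \<in> (J :: 'k mpoly set)"
    by (rule ideal_inD(4)[OF J_ideal monS_R[OF V2S]]) (rule fpol_in_Itilde[OF Ssub[OF sw tn] i conn])
  ultimately have "mon V - mon V' \<in> (J :: 'k mpoly set)" by simp
  then show ?thesis using that V'S PV b'V unfolding b'_def by blast
qed

end


context
  fixes r :: "nat list" and t :: nat and S :: "nat list set"
  assumes sw: "switchable r t S" and tn: "t \<le> length r"
begin

lemma Yk_Zk_ne: "Yk S a j v \<noteq> Zk S t b"
  by (simp add: Yk_def Zk_def)

lemma reach_aux:
  assumes U: "Poly_Mapping.keys U \<subseteq> S" and a: "a \<in> Poly_Mapping.keys U"
  shows "\<forall>V b. card {j \<in> {..<t}. b!j \<noteq> a!j} = d \<longrightarrow> b \<in> Poly_Mapping.keys V \<longrightarrow>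
     Zk S t b = Zk S t a \<longrightarrow> Poly_Mapping.keys V \<subseteq> S \<longrightarrow> Phi S t V = Phi S t U \<longrightarrow>
     (\<exists>V''. a \<in> Poly_Mapping.keys V'' \<and> Phi S t V'' = Phi S t U \<and> Poly_Mapping.keys V'' \<subseteq> S \<and>
        mon V - mon V'' \<in> (Itilde r t S :: 'k::field mpoly set))"
proof (induction d)
  case 0
  show ?case
  proof (intro allI impI)
    fix V b
    assume d: "card {j \<in> {..<t}. b!j \<noteq> a!j} = 0" and b: "b \<in> Poly_Mapping.keys V"
      and Z: "Zk S t b = Zk S t a" and V: "Poly_Mapping.keys V \<subseteq> S" and P: "Phi S t V = Phi S t U"
    have aS: "a \<in> S" using a U by blast
    have bS: "b \<in> S" using b V by blast
    have dr: "drop t b = drop t a" using Zk_inj[OF sw tn bS aS Z] by simp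
    have lb: "length b = length r" "length a = length r" using S_len[OF sw tn] aS bS by auto
    have lt: "\<And>j. j < t \<Longrightarrow> b!j = a!j" using d by auto
    have "b = a"
    proof (rule nth_equalityI)
      show "length b = length a" using lb by simp
    next
      fix j assume j: "j < length b"
      show "b!j = a!j"
      proof (cases "j < t")
        case True then show ?thesis using lt by simp
      next
        case False
        then have "b!j = drop t b ! (j - t)" "a!j = drop t a ! (j - t)" using j lb tn by auto
        then show ?thesis using dr by simp
      qed
    qed
    then show "\<exists>V''. a \<in> Poly_Mapping.keys V'' \<and> Phi S t V'' = Phi S t U \<and> Poly_Mapping.keys V'' \<subseteq> S \<and>
        mon V - mon V'' \<in> (Itilde r t S :: 'k::field mpoly set)"
      using b P V ideal_inD(2)[OF J_ideal[OF sw tn]] by (intro exI[of _ V]) simp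
  qed
next
  case (Suc d)
  show ?case
  proof (intro allI impI)
    fix V b
    assume d: "card {j \<in> {..<t}. b!j \<noteq> a!j} = Suc d" and b: "b \<in> Poly_Mapping.keys V"
      and Z: "Zk S t b = Zk S t a" and V: "Poly_Mapping.keys V \<subseteq> S" and P: "Phi S t V = Phi S t U"
    have aS: "a \<in> S" using a U by blast
    have bS: "b \<in> S" using b V by blast
    have rb: "rep S b = rep S a" using Zk_inj[OF sw tn bS aS Z] by simp
    have lb: "length b = length r" "length a = length r" using S_len[OF sw tn] aS bS by auto
    let ?D = "{j \<in> {..<t}. b!j \<noteq> a!j}"
    have "?D \<noteq> {}"
    proof
      assume e: "?D = {}"
      have "card ?D = 0" by (subst e) (rule card.empty)
      then show False using d by linarith
    qed
    then obtain i where i: "i < t" "b!i \<noteq> a!i" by auto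
    have "Poly_Mapping.lookup (Phi S t U) (Yk S a i (a!i)) \<ge> 1"
      by (rule Phi_ge[OF sw tn a E_Y[OF sw tn i(1)]])
    then have "Poly_Mapping.lookup (Phi S t V) (Yk S a i (a!i)) \<ge> 1" using P by simp
    then obtain c where c: "c \<in> Poly_Mapping.keys V" "Poly_Mapping.lookup (E S t c) (Yk S a i (a!i)) \<noteq> 0"
      using Phi_pos_obtain[OF sw tn] by blast
    from E_pos_cases[OF sw tn c(2)] Yk_Zk_ne obtain j where j: "j < t" "Yk S a i (a!i) = Yk S c j (c!j)"
      by blast
    then have ci: "c!i = a!i" and rc: "rep S c = rep S a" by (auto simp: Yk_def)
    have cS: "c \<in> S" using c V by blast
    have bc: "b \<noteq> c" using ci i(2) by auto
    have conn: "connected_in S b c" using rep_inj[OF sw tn bS cS] rb rc by simp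
    obtain V' where V': "Poly_Mapping.keys V' \<subseteq> S" "Phi S t V' = Phi S t V" "b[i := c!i] \<in> Poly_Mapping.keys V'"
      "mon V - mon V' \<in> (Itilde r t S :: 'k::field mpoly set)"
      using move[OF sw tn V b c(1) bc conn i(1)] by blast
    define b' where "b' = b[i := c!i]"
    have ib: "i < length b" using i(1) tn lb by simp
    have "rep S b' = rep S b" unfolding b'_def using rep_eq[OF sw tn sw_conn[OF sw tn conn i(1)]] by simp
    moreover have "drop t b' = drop t b" unfolding b'_def using i(1) by simp
    ultimately have Z': "Zk S t b' = Zk S t a" using Z by (simp add: Zk_def)
    have "{j \<in> {..<t}. b'!j \<noteq> a!j} = ?D - {i}"
      unfolding b'_def using ib ci by (auto simp: nth_list_update)
    then have d': "card {j \<in> {..<t}. b'!j \<noteq> a!j} = d" using d i by simp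
    have "\<exists>V''. a \<in> Poly_Mapping.keys V'' \<and> Phi S t V'' = Phi S t U \<and> Poly_Mapping.keys V'' \<subseteq> S \<and>
        mon V' - mon V'' \<in> (Itilde r t S :: 'k::field mpoly set)"
      using Suc.IH d' V'(3) Z' V'(1) V'(2) P unfolding b'_def by simp
    then obtain V'' where V'': "a \<in> Poly_Mapping.keys V''" "Phi S t V'' = Phi S t U" "Poly_Mapping.keys V'' \<subseteq> S"
        "mon V' - mon V'' \<in> (Itilde r t S :: 'k::field mpoly set)" by blast
    have "(mon V - mon V') + (mon V' - mon V'') \<in> (Itilde r t S :: 'k::field mpoly set)"
      by (rule ideal_inD(3)[OF J_ideal[OF sw tn] V'(4) V''(4)])
    then have "mon V - mon V'' \<in> (Itilde r t S :: 'k::field mpoly set)" by simp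
    then show "\<exists>V''. a \<in> Poly_Mapping.keys V'' \<and> Phi S t V'' = Phi S t U \<and> Poly_Mapping.keys V'' \<subseteq> S \<and>
        mon V - mon V'' \<in> (Itilde r t S :: 'k::field mpoly set)"
      using V'' by blast
  qed
qed

end


context
  fixes r :: "nat list" and t :: nat and S :: "nat list set"
  assumes sw: "switchable r t S" and tn: "t \<le> length r"
begin

lemma Phi_zero_iff: "Phi S t V = 0 \<Longrightarrow> V = 0"
proof -
  assume P: "Phi S t V = 0"
  have "Poly_Mapping.keys V = {}"
  proof (rule ccontr)
    assume "Poly_Mapping.keys V \<noteq> {}"
    then obtain c where c: "c \<in> Poly_Mapping.keys V" by blast
    have "Poly_Mapping.lookup (Phi S t V) (Zk S t c) \<ge> 1" by (rule Phi_ge[OF sw tn c E_Z[OF sw tn]])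
    then show False using P by simp
  qed
  then show "V = 0" by simp
qed

lemma markov_aux:
  "\<forall>U V. deg U = N \<longrightarrow> Poly_Mapping.keys U \<subseteq> S \<longrightarrow> Poly_Mapping.keys V \<subseteq> S \<longrightarrow>
     Phi S t U = Phi S t V \<longrightarrow> mon U - mon V \<in> (Itilde r t S :: 'k::field mpoly set)"
proof (induction N)
  case 0
  show ?case
  proof (intro allI impI)
    fix U V assume "deg U = 0" and P: "Phi S t U = Phi S t V"
    then have U0: "U = 0" by (simp add: deg_zero)
    then have "Phi S t V = 0" using P by simp
    then have "V = 0" by (rule Phi_zero_iff)
    then show "mon U - mon V \<in> (Itilde r t S :: 'k::field mpoly set)"
      using U0 ideal_inD(2)[OF J_ideal[OF sw tn]] by simp
  qed
next
  case (Suc N)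
  show ?case
  proof (intro allI impI)
    fix U V assume dU: "deg U = Suc N" and US: "Poly_Mapping.keys U \<subseteq> S"
      and VS: "Poly_Mapping.keys V \<subseteq> S" and P: "Phi S t U = Phi S t V"
    have "U \<noteq> 0" using dU by (auto simp: deg_def)
    then obtain a where a: "a \<in> Poly_Mapping.keys U" by (metis all_not_in_conv keys_eq_empty)
    have aS: "a \<in> S" using a US by blast
    obtain U0 where U0: "U = Poly_Mapping.single a 1 + U0" "Poly_Mapping.keys U0 \<subseteq> Poly_Mapping.keys U"
      using decomp[OF a] by blast
    have dU0: "deg U0 = N" using dU unfolding U0(1) deg_add deg_single by simp
    have "Poly_Mapping.lookup (Phi S t U) (Zk S t a) \<ge> 1" by (rule Phi_ge[OF sw tn a E_Z[OF sw tn]])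
    then have "Poly_Mapping.lookup (Phi S t V) (Zk S t a) \<ge> 1" using P by simp
    then obtain b where b: "b \<in> Poly_Mapping.keys V" "Poly_Mapping.lookup (E S t b) (Zk S t a) \<noteq> 0"
      using Phi_pos_obtain[OF sw tn] by blast
    from E_pos_cases[OF sw tn b(2)] have Zb: "Zk S t b = Zk S t a"
      using Yk_Zk_ne[OF sw tn] by metis
    obtain V'' where V'': "a \<in> Poly_Mapping.keys V''" "Phi S t V'' = Phi S t U" "Poly_Mapping.keys V'' \<subseteq> S"
      "mon V - mon V'' \<in> (Itilde r t S :: 'k::field mpoly set)"
      using reach_aux[OF sw tn US a, of "card {j \<in> {..<t}. b!j \<noteq> a!j}"] b(1) Zb VS P by metis
    obtain V0 where V0: "V'' = Poly_Mapping.single a 1 + V0" "Poly_Mapping.keys V0 \<subseteq> Poly_Mapping.keys V''"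
      using decomp[OF V''(1)] by blast
    have "E S t a + Phi S t U0 = E S t a + Phi S t V0"
      using V''(2) unfolding U0(1) V0(1) Phi_add Phi_single by simp
    then have "Phi S t U0 = Phi S t V0" by (rule add_left_imp_eq)
    moreover have "Poly_Mapping.keys U0 \<subseteq> S" "Poly_Mapping.keys V0 \<subseteq> S" using U0(2) US V0(2) V''(3) by auto
    ultimately have IH: "mon U0 - mon V0 \<in> (Itilde r t S :: 'k::field mpoly set)" using Suc.IH dU0 by blast
    have XR: "Xv a \<in> (polyR r :: 'k mpoly set)" using aS Ssub[OF sw tn] by (intro Xv_R) auto
    have "Xv a * (mon U0 - mon V0) \<in> (Itilde r t S :: 'k::field mpoly set)"
      by (rule ideal_inD(4)[OF J_ideal[OF sw tn] XR IH])
    then have mem: "Xv a * (mon U0 - mon V0) - (mon V - mon V'') \<in> (Itilde r t S :: 'k::field mpoly set)"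
      by (rule ideal_diff[OF J_ideal[OF sw tn] _ V''(4)])
    have eq: "(mon U :: 'k mpoly) - mon V = Xv a * (mon U0 - mon V0) - (mon V - mon V'')"
      unfolding U0(1) V0(1) mon_add mon_single by (simp add: algebra_simps)
    show "mon U - mon V \<in> (Itilde r t S :: 'k::field mpoly set)" unfolding eq by (rule mem)
  qed
qed

lemma markov:
  "Poly_Mapping.keys U \<subseteq> S \<Longrightarrow> Poly_Mapping.keys V \<subseteq> S \<Longrightarrow> Phi S t U = Phi S t V \<Longrightarrow>
    mon U - mon V \<in> (Itilde r t S :: 'k::field mpoly set)"
  using markov_aux by blast

end


context
  fixes r :: "nat list" and t :: nat and S :: "nat list set"
  assumes sw: "switchable r t S" and tn: "t \<le> length r"
begin

lemma PS_sub_Qs: "PS r t S \<subseteq> (Qs r t S :: 'k::field mpoly set)"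
proof (rule PS_least[OF Ssub[OF sw tn] Qs_ideal])
  fix a assume "a \<in> gridN r" "a \<notin> S"
  then show "Xv a \<in> (Qs r t S :: 'k::field mpoly set)" by (simp add: Qs_def Xv_R phi_Xv)
next
  fix i a b assume i: "i < t" and c: "connected_in S a b"
  have "a \<in> gridN r" "b \<in> gridN r" using conn_mem[OF c] Ssub[OF sw tn] by auto
  then show "fpol i a b \<in> (Qs r t S :: 'k::field mpoly set)"
    using phi_fpol[OF sw tn c i] by (simp add: Qs_def fpol_R)
qed

lemma Xv_notin_Qs: "a \<in> S \<Longrightarrow> Xv a \<notin> (Qs r t S :: 'k::field mpoly set)"
proof -
  assume a: "a \<in> S"
  have "Poly_Mapping.single (E S t a) (1::'k) \<noteq> 0"
    by (metis lookup_single_eq lookup_zero one_neq_zero)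
  then show ?thesis using a by (simp add: Qs_def phi_Xv)
qed

lemma Xv_in_PS: "a \<in> gridN r \<Longrightarrow> a \<notin> S \<Longrightarrow> Xv a \<in> (PS r t S :: 'k::field mpoly set)"
  using Xv_in_VarS VarS_sub_PS[OF Ssub[OF sw tn]] by blast

lemma Iideal_sub_Qs: "Iideal r t \<subseteq> (Qs r t S :: 'k::field mpoly set)"
proof (rule Iideal_least[OF Qs_ideal])
  fix i a b assume a: "a \<in> gridN r" and b: "b \<in> gridN r" and d: "dist a b = 2" and i: "i < t"
  have fR: "fpol i a b \<in> (polyR r :: 'k mpoly set)" by (rule fpol_R[OF a b])
  have la: "length a = length r" "length b = length r" using a b gridN_length by auto
  have il: "i < length a" using i tn la by simp
  show "fpol i a b \<in> (Qs r t S :: 'k::field mpoly set)"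
  proof (cases "a!i = b!i")
    case True
    have "sw i a b = a" by (simp add: sw_def flip: True)
    moreover have "sw i b a = b" by (simp add: sw_def True)
    ultimately have "fpol i a b = (0 :: 'k mpoly)" by (simp add: fpol_def)
    then show ?thesis using ideal_inD(2)[OF Qs_ideal] by simp
  next
    case False
    define s where "s = sw i a b"
    define s' where "s' = sw i b a"
    have sg: "s \<in> gridN r" "s' \<in> gridN r" unfolding s_def s'_def using a b sw_gridN by auto
    show ?thesis
    proof (cases "a \<in> S \<and> b \<in> S")
      case True
      have sS: "s \<in> S" using sw True d i unfolding switchable_def s_def by blast
      have d1: "dist a s \<le> 1" unfolding s_def sw_def by (rule dist_upd1)
      have "Dset s b \<subseteq> Dset a b - {i}"
        unfolding s_def sw_def Dset_def using il la by (auto simp: nth_list_update split: if_splits)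
      then have "card (Dset s b) \<le> card (Dset a b - {i})" by (intro card_mono) auto
      also have "\<dots> = 1" using d False il by (simp add: dist_Dset Dset_def)
      finally have d2: "dist s b \<le> 1" by (simp add: dist_Dset)
      have "connected_in S a s" using True sS d1 by (intro conn_adj) auto
      moreover have "connected_in S s b" using True sS d2 by (intro conn_adj) auto
      ultimately have "connected_in S a b" by (rule conn_trans)
      then show ?thesis using phi_fpol[OF sw tn _ i] fR by (simp add: Qs_def)
    next
      case False2: False
      have ds: "dist s s' = 2"
      proof -
        have "Dset s s' = Dset a b"
          unfolding s_def s'_def sw_def Dset_def using il la False
          by (auto simp: nth_list_update split: if_splits)
        then show ?thesis using d by (simp add: dist_Dset)
      qed
      have back1: "sw i s s' = a" unfolding s_def s'_def sw_def using il la by simp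
      have back2: "sw i s' s = b" unfolding s_def s'_def sw_def using il la by simp
      have "s \<notin> S \<or> s' \<notin> S"
      proof (rule ccontr)
        assume "\<not> (s \<notin> S \<or> s' \<notin> S)"
        then have "s \<in> S" "s' \<in> S" by auto
        then have "sw i s s' \<in> S" "sw i s' s \<in> S"
          using sw ds i dist_sym[of s s'] sg gridN_length unfolding switchable_def by metis+
        then show False using back1 back2 False2 by simp
      qed
      then have "phi S t (Xv s * Xv s' :: 'k mpoly) = 0" by (auto simp: phi_mult phi_Xv)
      moreover have "phi S t (Xv a * Xv b :: 'k mpoly) = 0" using False2 by (auto simp: phi_mult phi_Xv)
      ultimately have "phi S t (fpol i a b :: 'k mpoly) = 0"
        unfolding fpol_def s_def s'_def by (simp add: phi_diff)
      then show ?thesis using fR by (simp add: Qs_def)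
    qed
  qed
qed

end


context
  fixes r :: "nat list" and t :: nat and S :: "nat list set"
  assumes sw: "switchable r t S" and tn: "t \<le> length r"
begin

lemma Qs_sub_PS: "Qs r t S \<subseteq> (PS r t S :: 'k::field mpoly set)"
proof
  fix f :: "'k mpoly" assume "f \<in> Qs r t S"
  then have fR: "f \<in> polyR r" and pf: "phi S t f = 0" by (auto simp: Qs_def)
  have PSi: "ideal_in (polyR r) (PS r t S :: 'k mpoly set)" by (rule PS_ideal[OF Ssub[OF sw tn]])
  let ?K = "Poly_Mapping.keys f"
  let ?c = "Poly_Mapping.lookup f"
  let ?P = "\<lambda>m. Poly_Mapping.keys m \<subseteq> S"
  define \<rho> where "\<rho> m = (SOME m'. m' \<in> ?K \<and> ?P m' \<and> Phi S t m' = Phi S t m)" for m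
  have \<rho>1: "\<rho> m \<in> ?K \<and> ?P (\<rho> m) \<and> Phi S t (\<rho> m) = Phi S t m" if "m \<in> ?K" "?P m" for m
    unfolding \<rho>_def by (rule someI[of _ m]) (use that in simp)
  have \<rho>2: "\<rho> m = \<rho> m'" if "Phi S t m = Phi S t m'" for m m'
    unfolding \<rho>_def using that by simp
  have split: "Poly_Mapping.single m (?c m) =
      (if ?P m then 0 else Poly_Mapping.single m (?c m)) +
      ((if ?P m then Poly_Mapping.single m (?c m) - Poly_Mapping.single (\<rho> m) (?c m) else 0) +
       (if ?P m then Poly_Mapping.single (\<rho> m) (?c m) else 0))" for m
    by simp
  have "f = (\<Sum>m\<in>?K. Poly_Mapping.single m (?c m))" by (rule poly_sum_single)
  also have "\<dots> = (\<Sum>m\<in>?K. if ?P m then 0 else Poly_Mapping.single m (?c m)) +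
      ((\<Sum>m\<in>?K. if ?P m then Poly_Mapping.single m (?c m) - Poly_Mapping.single (\<rho> m) (?c m) else 0) +
       (\<Sum>m\<in>?K. if ?P m then Poly_Mapping.single (\<rho> m) (?c m) else 0))"
    by (subst split) (simp only: sum.distrib)
  finally have feq: "f = (\<Sum>m\<in>?K. if ?P m then 0 else Poly_Mapping.single m (?c m)) +
      ((\<Sum>m\<in>?K. if ?P m then Poly_Mapping.single m (?c m) - Poly_Mapping.single (\<rho> m) (?c m) else 0) +
       (\<Sum>m\<in>?K. if ?P m then Poly_Mapping.single (\<rho> m) (?c m) else 0))" .
  have zero: "(\<Sum>m\<in>?K. if ?P m then Poly_Mapping.single (\<rho> m) (?c m) else 0) = 0"
  proof (rule poly_mapping_eqI)
    fix k
    have "Poly_Mapping.lookup (\<Sum>m\<in>?K. if ?P m then Poly_Mapping.single (\<rho> m) (?c m) else 0) k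
        = (\<Sum>m\<in>?K. if ?P m \<and> \<rho> m = k then ?c m else 0)"
      unfolding lookup_sum by (intro sum.cong refl) (auto simp: lookup_single when_def)
    also have "\<dots> = 0"
    proof (cases "\<exists>m0\<in>?K. ?P m0 \<and> \<rho> m0 = k")
      case True
      then obtain m0 where m0: "m0 \<in> ?K" "?P m0" "\<rho> m0 = k" by blast
      have "(\<Sum>m\<in>?K. if ?P m \<and> \<rho> m = k then ?c m else 0)
          = (\<Sum>m\<in>?K. if ?P m \<and> Phi S t m = Phi S t m0 then ?c m else 0)"
      proof (intro sum.cong refl)
        fix m assume m: "m \<in> ?K"
        have "?P m \<Longrightarrow> \<rho> m = k \<longleftrightarrow> Phi S t m = Phi S t m0"
        proof
          assume "?P m" "\<rho> m = k"
          then show "Phi S t m = Phi S t m0" using \<rho>1[OF m] \<rho>1[OF m0(1,2)] m0(3) by metis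
        next
          assume "Phi S t m = Phi S t m0"
          then show "\<rho> m = k" using \<rho>2 m0(3) by metis
        qed
        then show "(if ?P m \<and> \<rho> m = k then ?c m else 0) =
            (if ?P m \<and> Phi S t m = Phi S t m0 then ?c m else 0)" by auto
      qed
      also have "\<dots> = Poly_Mapping.lookup (phi S t f) (Phi S t m0)" by (simp add: lookup_phi)
      also have "\<dots> = 0" using pf by simp
      finally show ?thesis .
    next
      case False
      then show ?thesis by (intro sum.neutral) auto
    qed
    finally show "Poly_Mapping.lookup (\<Sum>m\<in>?K. if ?P m then Poly_Mapping.single (\<rho> m) (?c m) else 0) k =
        Poly_Mapping.lookup 0 k" by simp
  qed
  have bad: "(\<Sum>m\<in>?K. if ?P m then 0 else Poly_Mapping.single m (?c m)) \<in> PS r t S"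
  proof (rule ideal_sum_closed[OF PSi])
    fix m assume m: "m \<in> ?K"
    show "(if ?P m then 0 else Poly_Mapping.single m (?c m)) \<in> PS r t S"
    proof (cases "?P m")
      case True then show ?thesis using ideal_inD(2)[OF PSi] by simp
    next
      case False
      then obtain a where a: "a \<in> Poly_Mapping.keys m" "a \<notin> S" by blast
      have mg: "Poly_Mapping.keys m \<subseteq> gridN r" using fR m by (simp add: polyR_iff)
      obtain m0 where m0: "m = Poly_Mapping.single a 1 + m0" "Poly_Mapping.keys m0 \<subseteq> Poly_Mapping.keys m"
        using decomp[OF a(1)] by blast
      have ag: "a \<in> gridN r" using mg a by blast
      have "Xv a * Poly_Mapping.single m0 (?c m) \<in> (PS r t S :: 'k mpoly set)"
        by (rule ideal_mult_right[OF PSi _ Xv_in_PS[OF sw tn ag a(2)]]) (rule polyR_single, use m0 mg in blast)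
      moreover have "Xv a * Poly_Mapping.single m0 (?c m) = Poly_Mapping.single m (?c m)"
        unfolding Xv_def m0(1) by (simp add: mult_single)
      ultimately show ?thesis using False by simp
    qed
  qed
  have good: "(\<Sum>m\<in>?K. if ?P m then Poly_Mapping.single m (?c m) - Poly_Mapping.single (\<rho> m) (?c m) else 0) \<in> PS r t S"
  proof (rule ideal_sum_closed[OF PSi])
    fix m assume m: "m \<in> ?K"
    show "(if ?P m then Poly_Mapping.single m (?c m) - Poly_Mapping.single (\<rho> m) (?c m) else 0) \<in> PS r t S"
    proof (cases "?P m")
      case False then show ?thesis using ideal_inD(2)[OF PSi] by simp
    next
      case True
      have r1: "?P (\<rho> m)" "Phi S t (\<rho> m) = Phi S t m" using \<rho>1[OF m True] by auto
      have "mon m - mon (\<rho> m) \<in> (Itilde r t S :: 'k mpoly set)"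
        by (rule markov[OF sw tn True r1(1) r1(2)[symmetric]])
      then have "Poly_Mapping.single 0 (?c m) * (mon m - mon (\<rho> m)) \<in> (Itilde r t S :: 'k mpoly set)"
        by (rule ideal_inD(4)[OF J_ideal[OF sw tn] polyR_const])
      then have "Poly_Mapping.single 0 (?c m) * (mon m - mon (\<rho> m)) \<in> (PS r t S :: 'k mpoly set)"
        using Itilde_sub_PS[OF Ssub[OF sw tn]] by blast
      moreover have "Poly_Mapping.single 0 (?c m) * (mon m - mon (\<rho> m)) =
          Poly_Mapping.single m (?c m) - Poly_Mapping.single (\<rho> m) (?c m)"
        by (simp add: mon_def mult_single algebra_simps)
      ultimately show ?thesis using True by simp
    qed
  qed
  have "f = (\<Sum>m\<in>?K. if ?P m then 0 else Poly_Mapping.single m (?c m)) +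
      (\<Sum>m\<in>?K. if ?P m then Poly_Mapping.single m (?c m) - Poly_Mapping.single (\<rho> m) (?c m) else 0)"
    using feq zero by simp
  then show "f \<in> PS r t S" using ideal_inD(3)[OF PSi bad good] by simp
qed

lemma PS_eq_Qs: "PS r t S = (Qs r t S :: 'k::field mpoly set)"
  using PS_sub_Qs[OF sw tn] Qs_sub_PS by blast

end


lemma prime_mult_R:
  assumes "prime_in (polyR r) P" "x \<in> polyR r" "y \<in> polyR r" "x * y \<in> (P :: 'k::field mpoly set)"
  shows "x \<in> P \<or> y \<in> P"
  using assms by (simp add: prime_in_def)

lemma prime_ideal: "prime_in (polyR r) P \<Longrightarrow> ideal_in (polyR r) (P :: 'k::field mpoly set)"
  by (simp add: prime_in_def)

lemma B_lemma:
  fixes P :: "'k::field mpoly set"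
  assumes pr: "prime_in (polyR r) P" and IP: "Iideal r t \<subseteq> P"
    and sw: "switchable r t S" and tn: "t \<le> length r"
    and SP: "\<And>a. a \<in> S \<Longrightarrow> Xv a \<notin> P"
    and ab: "connected_in S a b" and i: "i < t"
  shows "fpol i a b \<in> P"
proof -
  have Pi: "ideal_in (polyR r) P" by (rule prime_ideal[OF pr])
  have Sg: "S \<subseteq> gridN r" by (rule Ssub[OF sw tn])
  have XR: "x \<in> S \<Longrightarrow> Xv x \<in> (polyR r :: 'k mpoly set)" for x using Sg by (intro Xv_R) auto
  let ?\<alpha> = "a!i" and ?\<beta> = "b!i"
  have aS: "a \<in> S" and bS: "b \<in> S" using conn_mem[OF ab] by auto
  have la: "length a = length r" using aS S_len[OF sw tn] by simp
  have ia: "i < length r" using i tn by simp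
  have aB: "a[i := ?\<beta>] \<in> S" by (rule CL'[OF sw tn ab i])
  have main: "(adjR S)\<^sup>*\<^sup>* a p \<Longrightarrow>
      Xv a * Xv (p[i := ?\<beta>]) - Xv (a[i := ?\<beta>]) * Xv (p[i := ?\<alpha>]) \<in> P" for p
  proof (induction rule: rtranclp_induct)
    case base
    have "a[i := ?\<alpha>] = a" by simp
    then show ?case using ideal_inD(2)[OF Pi] by (simp add: mult.commute)
  next
    case (step p q)
    have pS: "p \<in> S" and qS: "q \<in> S" and dpq: "dist p q \<le> 1" using step(2) by (auto simp: adjR_def)
    have ap: "connected_in S a p" using step(1) aS pS by (simp add: connected_in_adjR)
    have aq: "connected_in S a q" using ap conn_adj[OF pS qS dpq] by (rule conn_trans)
    have pa: "connected_in S p a" by (rule conn_sym[OF Sg ap])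
    have qa: "connected_in S q a" by (rule conn_sym[OF Sg aq])
    have qb: "connected_in S q b" by (rule conn_trans[OF qa ab])
    have pb: "connected_in S p b" by (rule conn_trans[OF pa ab])
    have lp: "length p = length r" "length q = length r" using pS qS S_len[OF sw tn] by auto
    have pA: "p[i := ?\<alpha>] \<in> S" using CL'[OF sw tn pa i] la ia by simp
    have qA: "q[i := ?\<alpha>] \<in> S" using CL'[OF sw tn qa i] la ia by simp
    have pB: "p[i := ?\<beta>] \<in> S" using CL'[OF sw tn pb i] by simp
    have qB: "q[i := ?\<beta>] \<in> S" using CL'[OF sw tn qb i] by simp
    let ?T = "Xv a * Xv (q[i := ?\<beta>]) - Xv (a[i := ?\<beta>]) * Xv (q[i := ?\<alpha>]) :: 'k mpoly"
    have TR: "?T \<in> polyR r" using XR aS qB aB qA by (intro polyR_diff polyR_mult) auto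
    have lpq: "length p = length q" using lp by simp
    from dist_le1[OF lpq dpq] consider "q = p" | j where "j < length p" "q = p[j := q!j]" "p!j \<noteq> q!j"
      by blast
    then show ?case
    proof cases
      case 1 then show ?thesis using step(3) by simp
    next
      case (2 j)
      obtain y where qy: "q = p[j := y]" "p!j \<noteq> y" using 2(2,3) by blast
      show ?thesis
      proof (cases "j = i")
        case True
        have "q[i := ?\<alpha>] = p[i := ?\<alpha>]" "q[i := ?\<beta>] = p[i := ?\<beta>]" unfolding qy(1) True by simp_all
        then show ?thesis using step(3) by simp
      next
        case ji: False
        show ?thesis
        proof (cases "?\<alpha> = ?\<beta>")
          case True
          then have "a[i := ?\<beta>] = a" by (metis list_update_id)
          then have "?T = 0" using True by (simp add: mult.commute)
          then show ?thesis using ideal_inD(2)[OF Pi] by simp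
        next
          case False
          have d2: "dist (p[i := ?\<alpha>]) (q[i := ?\<beta>]) = 2"
          proof (rule dist_two[where i=i and l=j])
            fix k assume k: "k < length (p[i := ?\<alpha>])"
            have e1: "p[i := ?\<alpha>] ! k = (if k = i then ?\<alpha> else p!k)" using k by (simp add: nth_list_update)
            have e2: "q[i := ?\<beta>] ! k = (if k = i then ?\<beta> else if k = j then y else p!k)"
              unfolding qy(1) using k by (simp add: nth_list_update)
            show "(p[i := ?\<alpha>] ! k \<noteq> q[i := ?\<beta>] ! k) = (k = i \<or> k = j)"
              unfolding e1 e2 using False ji qy(2) by auto
          qed (use lp ia 2(1) ji in auto)
          have sw1: "sw i (p[i := ?\<alpha>]) (q[i := ?\<beta>]) = p[i := ?\<beta>]"
            unfolding sw_def using lp ia by simp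
          have sw2: "sw i (q[i := ?\<beta>]) (p[i := ?\<alpha>]) = q[i := ?\<alpha>]"
            unfolding sw_def using lp ia by simp
          have G: "Xv (p[i := ?\<alpha>]) * Xv (q[i := ?\<beta>]) - Xv (p[i := ?\<beta>]) * Xv (q[i := ?\<alpha>]) \<in> P"
          proof -
            have "fpol i (p[i := ?\<alpha>]) (q[i := ?\<beta>]) \<in> (Iideal r t :: 'k mpoly set)"
              using pA qB Sg d2 i by (intro fpol_in_Iideal) auto
            then show ?thesis using IP unfolding fpol_def sw1 sw2 by blast
          qed
          have H1: "Xv a * (Xv (p[i := ?\<alpha>]) * Xv (q[i := ?\<beta>]) - Xv (p[i := ?\<beta>]) * Xv (q[i := ?\<alpha>])) \<in> P"
            by (rule ideal_inD(4)[OF Pi XR[OF aS] G])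
          have H2: "Xv (q[i := ?\<alpha>]) * (Xv a * Xv (p[i := ?\<beta>]) - Xv (a[i := ?\<beta>]) * Xv (p[i := ?\<alpha>])) \<in> P"
            by (rule ideal_inD(4)[OF Pi XR[OF qA] step(3)])
          have "Xv (p[i := ?\<alpha>]) * ?T =
              Xv a * (Xv (p[i := ?\<alpha>]) * Xv (q[i := ?\<beta>]) - Xv (p[i := ?\<beta>]) * Xv (q[i := ?\<alpha>])) +
              Xv (q[i := ?\<alpha>]) * (Xv a * Xv (p[i := ?\<beta>]) - Xv (a[i := ?\<beta>]) * Xv (p[i := ?\<alpha>]))"
            by (simp add: algebra_simps)
          then have "Xv (p[i := ?\<alpha>]) * ?T \<in> P" using ideal_inD(3)[OF Pi H1 H2] by simp
          then have "Xv (p[i := ?\<alpha>]) \<in> P \<or> ?T \<in> P" by (rule prime_mult_R[OF pr XR[OF pA] TR])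
          then show ?thesis using SP[OF pA] by blast
        qed
      qed
    qed
  qed
  have "(adjR S)\<^sup>*\<^sup>* a b" using ab by (simp add: connected_in_adjR)
  from main[OF this] have "Xv a * Xv (b[i := ?\<beta>]) - Xv (a[i := ?\<beta>]) * Xv (b[i := ?\<alpha>]) \<in> P" .
  then show ?thesis by (simp add: fpol_def sw_def)
qed


theorem theorem4p11:
  fixes r :: "nat list" and t :: nat and P :: "'k::field mpoly set"
  assumes "length r \<ge> 1"
    and "\<forall>i<length r. r ! i \<ge> 1"
    and "1 \<le> t" and "t \<le> length r"
    and "minimal_prime_over (polyR r) (Iideal r t) P"
  shows "\<exists>S. max_switchable TYPE('k) r t S \<and> P = PS r t S"
proof -
  note tn = assms(4)
  have pr: "prime_in (polyR r) P" and IP: "Iideal r t \<subseteq> P"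
    and minP: "\<And>Q. prime_in (polyR r) Q \<Longrightarrow> Iideal r t \<subseteq> Q \<Longrightarrow> Q \<subseteq> P \<Longrightarrow> Q = P"
    using assms(5) unfolding minimal_prime_over_def by blast+
  have Pi: "ideal_in (polyR r) P" by (rule prime_ideal[OF pr])
  define S where "S = {a \<in> gridN r. Xv a \<notin> P}"
  have sw: "switchable r t S"
    unfolding switchable_def
  proof (intro conjI ballI allI impI)
    show "S \<subseteq> gridN r" unfolding S_def by blast
  next
    fix a b i assume aS: "a \<in> S" and bS: "b \<in> S" and d: "dist a b = 2" and i: "i < t"
    have ag: "a \<in> gridN r" and bg: "b \<in> gridN r" and aP: "Xv a \<notin> P" and bP: "Xv b \<notin> P"
      using aS bS unfolding S_def by auto
    have sg: "sw i a b \<in> gridN r" "sw i b a \<in> gridN r" using ag bg sw_gridN by auto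
    have "Xv (sw i a b) \<notin> P"
    proof
      assume sP: "Xv (sw i a b) \<in> P"
      have "Xv (sw i a b) * Xv (sw i b a) \<in> P" by (rule ideal_mult_right[OF Pi Xv_R[OF sg(2)] sP])
      moreover have "fpol i a b \<in> P" using fpol_in_Iideal[OF ag bg d i] IP by blast
      ultimately have "fpol i a b + Xv (sw i a b) * Xv (sw i b a) \<in> P" by (rule ideal_inD(3)[OF Pi, rotated])
      then have "Xv a * Xv b \<in> P" by (simp add: fpol_def)
      then have "Xv a \<in> P \<or> Xv b \<in> P" by (rule prime_mult_R[OF pr Xv_R[OF ag] Xv_R[OF bg]])
      then show False using aP bP by blast
    qed
    then show "sw i a b \<in> S" using sg unfolding S_def by blast
  qed
  have PSP: "PS r t S \<subseteq> P"
  proof (rule PS_least[OF Ssub[OF sw tn] Pi])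
    fix a assume "a \<in> gridN r" "a \<notin> S"
    then show "Xv a \<in> P" unfolding S_def by blast
  next
    fix i a b assume "i < t" "connected_in S a b"
    then show "fpol i a b \<in> P"
      using B_lemma[OF pr IP sw tn] unfolding S_def by blast
  qed
  have QsP: "Qs r t S \<subseteq> P" using PSP PS_eq_Qs[OF sw tn, where 'k='k] by blast
  have QP: "Qs r t S = P" by (rule minP[OF Qs_prime Iideal_sub_Qs[OF sw tn] QsP])
  have eqP: "P = PS r t S" using QP PS_eq_Qs[OF sw tn, where 'k='k] by simp
  have "max_switchable TYPE('k) r t S"
    unfolding max_switchable_def
  proof (intro conjI allI impI)
    show "switchable r t S" by (rule sw)
  next
    fix T assume T: "switchable r t T \<and> S \<subset> T"
    then have swT: "switchable r t T" and ST: "S \<subset> T" by auto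
    obtain a where aT: "a \<in> T" and aS: "a \<notin> S" using ST by blast
    have ag: "a \<in> gridN r" using aT Ssub[OF swT tn] by blast
    have inS: "Xv a \<in> (PS r t S :: 'k mpoly set)" by (rule Xv_in_PS[OF sw tn ag aS])
    have notT: "Xv a \<notin> (PS r t T :: 'k mpoly set)"
      using Xv_notin_Qs[OF swT tn aT] PS_eq_Qs[OF swT tn, where 'k='k] by simp
    show "\<not> (PS r t S :: 'k mpoly set) \<subseteq> PS r t T" using inS notT by blast
    show "\<not> (PS r t T :: 'k mpoly set) \<subseteq> PS r t S"
    proof
      assume sub: "(PS r t T :: 'k mpoly set) \<subseteq> PS r t S"
      have QTP: "Qs r t T \<subseteq> P" using sub eqP PS_eq_Qs[OF swT tn, where 'k='k] by blast
      have "Qs r t T = P" by (rule minP[OF Qs_prime Iideal_sub_Qs[OF swT tn] QTP])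
      then have "PS r t T = P" using PS_eq_Qs[OF swT tn, where 'k='k] by simp
      then show False using inS notT eqP by simp
    qed
  qed
  then show ?thesis using eqP by blast
qed


end
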